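(* Let $\alpha_1,\alpha_2>0$ with $\alpha_1\neq\alpha_2$. Then $x=\tfrac12$ is the unique solution in $(0,1)$ of $F_{\alpha_1}(x)=F_{\alpha_2}(x)$.
   Context: For $\alpha>0$, $F_\alpha(t)=\int_0^t\frac{[x(1-x)]^{\alpha-1}}{B(\alpha,\alpha)}dx$ is the distribution function of the symmetric Beta$(\alpha,\alpha)$ law, $B$ being the Beta function. *)

theory Defs
  imports "HOL-Analysis.Analysis"
begin

definition beta_cdf :: "real \<Rightarrow> real \<Rightarrow> real" where
  "beta_cdf \<alpha> t = integral {0..t} (\<lambda>x. (x * (1 - x)) powr (\<alpha> - 1) / Beta \<alpha> \<alpha>)"

end

theory Submission
  imports Defs
begin

definition dens :: "real \<Rightarrow> real \<Rightarrow> real" where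
  "dens a t = (t * (1 - t)) powr (a - 1) / Beta a a"

lemma cdf_dens: "beta_cdf a x = integral {0..x} (dens a)"
  unfolding beta_cdf_def dens_def by simp

lemma Beta_pos: "a > 0 \<Longrightarrow> Beta a a > (0::real)"
  by (simp add: Beta_def Gamma_real_pos)

lemma dens_int:
  assumes "a > 0" shows "(dens a has_integral 1) {0..1}"
proof -
  have "((\<lambda>t. t powr (a-1) * (1-t) powr (a-1)) has_integral Beta a a) {0..1}"
    by (rule has_integral_Beta_real[OF assms assms])
  then have h: "((\<lambda>t. t powr (a-1) * (1-t) powr (a-1) / Beta a a) has_integral Beta a a / Beta a a) {0..1}"
    by (rule has_integral_divide)
  have e: "Beta a a / Beta a a = 1" using Beta_pos[OF assms] by (rule divide_self[OF dual_order.strict_implies_not_eq])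
  have eq: "\<And>t. t \<in> {0..1} \<Longrightarrow> t powr (a-1) * (1-t) powr (a-1) / Beta a a = dens a t"
    unfolding dens_def by (simp only: powr_mult)
  from h have "((\<lambda>t. t powr (a-1) * (1-t) powr (a-1) / Beta a a) has_integral 1) {0..1}"
    unfolding e .
  then show ?thesis by (rule has_integral_eq[rotated]) (rule eq)
qed

lemma dens_integrable:
  assumes "a > 0" "0 \<le> c" "d \<le> 1" shows "dens a integrable_on {c..d}"
proof -
  have "dens a integrable_on {0..1}" using dens_int assms by blast
  then show ?thesis by (rule integrable_subinterval_real) (use assms in auto)
qed

lemma dens_sym: "dens a (1 - t) = dens a t"
  unfolding dens_def by (simp add: mult.commute)

lemma dens_refl:
  "integral {1-x..1} (dens a) = integral {0..x} (dens a)"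
proof -
  have "integral {-x..0} (\<lambda>t. dens a (t+1)) = integral {1-x..1} (dens a)"
    using integral_shift_real_ivl[where f="dens a" and a="1-x" and b=1 and c=1] by simp
  moreover have "integral {-x..0} (\<lambda>t. dens a (t+1)) = integral {0..x} (\<lambda>t. dens a (1 - t))"
    using Henstock_Kurzweil_Integration.integral_reflect_real[where b=x and a=0 and f="\<lambda>t. dens a (1-t)"] by (simp add: add.commute)
  moreover have "(\<lambda>t. dens a (1 - t)) = dens a" using dens_sym by auto
  ultimately show ?thesis by simp
qed

lemma cdf_compl:
  assumes "a > 0" "0 \<le> x" "x \<le> 1"
  shows "integral {0..x} (dens a) + integral {0..1-x} (dens a) = 1"
proof -
  have "integral {0..x} (dens a) + integral {x..1} (dens a) = integral {0..1} (dens a)"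
    using Henstock_Kurzweil_Integration.integral_combine[where a=0 and c=x and b=1 and f="dens a"] dens_integrable[of a 0 1] assms by simp
  moreover have "integral {0..1} (dens a) = 1" using dens_int assms integral_unique by blast
  moreover have "integral {x..1} (dens a) = integral {0..1-x} (dens a)"
    using dens_refl[of "1-x" a] by simp
  ultimately show ?thesis by simp
qed

lemma dens_cont:
  assumes "0 < c" "d < 1" shows "continuous_on {c..d} (dens a)"
proof -
  have "continuous_on {c..d} (\<lambda>t. (t * (1 - t)) powr (a - 1))"
  proof (rule continuous_on_powr)
    show "continuous_on {c..d} (\<lambda>t. t * (1 - t))" by (intro continuous_intros)
    show "continuous_on {c..d} (\<lambda>t. a - 1)" by (intro continuous_intros)
    show "\<forall>t\<in>{c..d}. t * (1 - t) \<noteq> 0"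
    proof
      fix t assume "t \<in> {c..d}"
      then have "0 < t" "0 < 1 - t" using assms by auto
      then have "0 < t * (1 - t)" by (rule mult_pos_pos)
      then show "t * (1 - t) \<noteq> 0" by (rule dual_order.strict_implies_not_eq)
    qed
  qed
  then have "continuous_on {c..d} (\<lambda>t. inverse (Beta a a) * (t * (1 - t)) powr (a - 1))"
    by (rule continuous_on_mult[OF continuous_on_const])
  moreover have "(\<lambda>t. inverse (Beta a a) * (t * (1 - t)) powr (a - 1)) = dens a"
    by (auto simp: dens_def divide_inverse mult.commute)
  ultimately show ?thesis by metis
qed

lemma dens_pos:
  assumes "a > 0" "0 < t" "t < 1" shows "dens a t > 0"
proof -
  have "0 < t * (1 - t)" using assms by (intro mult_pos_pos) auto
  then have "t * (1 - t) \<noteq> 0" by (rule dual_order.strict_implies_not_eq)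
  then have "0 < (t * (1 - t)) powr (a - 1)" by (metis powr_gt_zero)
  then show ?thesis unfolding dens_def using Beta_pos[OF assms(1)] by (rule divide_pos_pos)
qed

lemma main_ineq:
  assumes "0 < a1" "a1 < a2" "0 < x" "x < 1/2"
  shows "integral {0..x} (dens a2) < integral {0..x} (dens a1)"
proof -
  define B1 where "B1 = Beta a1 a1"
  define B2 where "B2 = Beta a2 a2"
  have B1: "B1 > 0" "B2 > 0" using Beta_pos assms unfolding B1_def B2_def by auto
  define r where "r t = B1 / B2 * (t * (1 - t)) powr (a2 - a1)" for t
  have key: "dens a2 t = dens a1 t * r t" if "0 < t" "t < 1" for t
  proof -
    have u: "t * (1 - t) > 0" using that by auto
    have "(t * (1 - t)) powr (a2 - 1) = (t * (1 - t)) powr (a1 - 1) * (t * (1 - t)) powr (a2 - a1)"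
      by (simp add: powr_add[symmetric])
    then show ?thesis unfolding dens_def r_def B1_def B2_def using B1 B1_def B2_def by (simp add: field_simps)
  qed
  have mono: "r t < r s" if "0 < t * (1 - t)" "t * (1 - t) < s * (1 - s)" for t s
  proof -
    have "(t * (1 - t)) powr (a2 - a1) < (s * (1 - s)) powr (a2 - a1)"
      using that assms by (intro powr_less_mono2) auto
    then have "B1 * (t * (1 - t)) powr (a2 - a1) < B1 * (s * (1 - s)) powr (a2 - a1)"
      using B1 by (intro mult_strict_left_mono) auto
    then have "B1 * (t * (1 - t)) powr (a2 - a1) / B2 < B1 * (s * (1 - s)) powr (a2 - a1) / B2"
      using B1 by (intro divide_strict_right_mono) auto
    then show ?thesis unfolding r_def by simp
  qed
  have lt: "dens a2 t < dens a1 t" if "0 < t" "t < 1" "r t < 1" for t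
  proof -
    have "dens a1 t > 0" using dens_pos assms that by auto
    then show ?thesis using key[OF that(1,2)] that(3) by (simp add: mult_less_cancel_left1)
  qed
  have gt: "dens a2 t > dens a1 t" if "0 < t" "t < 1" "r t > 1" for t
  proof -
    have "dens a1 t > 0" using dens_pos assms that by auto
    then show ?thesis using key[OF that(1,2)] that(3) by (simp add: mult_less_cancel_left1)
  qed
  show ?thesis
  proof (cases "r x \<le> 1")
    case True
    have rl: "r t < 1" if "0 < t" "t < x" for t
    proof -
      have "t * (1 - t) < x * (1 - x)"
      proof -
        have "x * (1 - x) - t * (1 - t) = (x - t) * (1 - x - t)" by (simp add: algebra_simps)
        moreover have "(x - t) * (1 - x - t) > 0" using that assms by (intro mult_pos_pos) linarith+
        ultimately show ?thesis by linarith
      qed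
      then have "r t < r x" using that assms by (intro mono) auto
      then show ?thesis using True by linarith
    qed
    have le: "dens a2 t \<le> dens a1 t" if "t \<in> {0..x/2}" for t
    proof (cases "t = 0")
      case True then show ?thesis by (simp add: dens_def)
    next
      case False
      then have t: "0 < t" "t < x" using that assms by auto
      then have "r t < 1" by (rule rl)
      then show ?thesis using t assms by (intro less_imp_le lt) auto
    qed
    have I1: "integral {0..x/2} (dens a2) \<le> integral {0..x/2} (dens a1)"
      using le assms by (intro integral_le dens_integrable) auto
    have I2: "integral {x/2..x} (dens a2) < integral {x/2..x} (dens a1)"
    proof (rule integral_less_real)
      show "continuous_on {x/2..x} (dens a2)" "continuous_on {x/2..x} (dens a1)"
        using assms by (intro dens_cont; simp)+
      show "{x/2<..<x} \<noteq> {}" using assms by simp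
      fix t assume "t \<in> {x/2<..<x}"
      then have t: "0 < t" "t < x" using assms by auto
      then have "r t < 1" by (rule rl)
      then show "dens a2 t < dens a1 t" using t assms by (intro lt) auto
    qed
    have "integral {0..x/2} (dens a) + integral {x/2..x} (dens a) = integral {0..x} (dens a)"
      if "a > 0" for a
      using Henstock_Kurzweil_Integration.integral_combine[where a=0 and c="x/2" and b=x and f="dens a"] dens_integrable[of a 0 x] assms that by simp
    then have "integral {0..x/2} (dens a1) + integral {x/2..x} (dens a1) = integral {0..x} (dens a1)"
      "integral {0..x/2} (dens a2) + integral {x/2..x} (dens a2) = integral {0..x} (dens a2)"
      using assms by auto
    then show ?thesis using I1 I2 by linarith
  next
    case False
    have rg: "r t > 1" if "x < t" "t < 1 - x" for t
    proof -
      have "x * (1 - x) < t * (1 - t)"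
      proof -
        have "t * (1 - t) - x * (1 - x) = (t - x) * (1 - x - t)" by (simp add: algebra_simps)
        moreover have "(t - x) * (1 - x - t) > 0" using that assms by (intro mult_pos_pos) linarith+
        ultimately show ?thesis by linarith
      qed
      then have "r x < r t" using that assms by (intro mono) auto
      then show ?thesis using False by linarith
    qed
    have I: "integral {x..1-x} (dens a1) < integral {x..1-x} (dens a2)"
    proof (rule integral_less_real)
      show "continuous_on {x..1-x} (dens a2)" "continuous_on {x..1-x} (dens a1)"
        using assms by (intro dens_cont; simp)+
      show "{x<..<1-x} \<noteq> {}" using assms by simp
      fix t assume "t \<in> {x<..<1-x}"
      then have t: "x < t" "t < 1-x" using assms by auto
      then have "r t > 1" by (rule rg)
      then show "dens a1 t < dens a2 t" using t assms by (intro gt) auto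
    qed
    have "2 * integral {0..x} (dens a) + integral {x..1-x} (dens a) = 1" if "a > 0" for a
    proof -
      have "integral {0..x} (dens a) + integral {x..1-x} (dens a) = integral {0..1-x} (dens a)"
        using Henstock_Kurzweil_Integration.integral_combine[where a=0 and c=x and b="1-x" and f="dens a"] dens_integrable[of a 0 "1-x"] assms that by simp
      moreover have "integral {0..x} (dens a) + integral {0..1-x} (dens a) = 1"
        using cdf_compl[of a x] assms that by simp
      ultimately show ?thesis by linarith
    qed
    then have "2 * integral {0..x} (dens a1) + integral {x..1-x} (dens a1) = 1"
      "2 * integral {0..x} (dens a2) + integral {x..1-x} (dens a2) = 1"
      using assms by auto
    then show ?thesis using I by linarith
  qed
qed

lemma neq:
  assumes "0 < a1" "a1 < a2" "0 < x" "x < 1" "x \<noteq> 1/2"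
  shows "beta_cdf a1 x \<noteq> beta_cdf a2 x"
proof (cases "x < 1/2")
  case True
  then show ?thesis using main_ineq[of a1 a2 x] assms by (simp add: cdf_dens)
next
  case False
  then have "1 - x < 1/2" using assms by auto
  then have "integral {0..1-x} (dens a2) < integral {0..1-x} (dens a1)"
    using main_ineq[of a1 a2 "1-x"] assms by simp
  moreover have "integral {0..x} (dens a) + integral {0..1-x} (dens a) = 1" if "a > 0" for a
    using cdf_compl[of a x] assms that by simp
  moreover have "integral {0..x} (dens a1) + integral {0..1-x} (dens a1) = 1"
    "integral {0..x} (dens a2) + integral {0..1-x} (dens a2) = 1" using calculation(2) assms by auto
  ultimately show ?thesis unfolding cdf_dens by linarith
qed

lemma half: "a > 0 \<Longrightarrow> beta_cdf a (1/2) = 1/2"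
  using cdf_compl[of a "1/2"] unfolding cdf_dens by simp

theorem proposition3:
  fixes \<alpha>1 \<alpha>2 :: real
  assumes "\<alpha>1 > 0" and "\<alpha>2 > 0" and "\<alpha>1 \<noteq> \<alpha>2"
  shows "{x \<in> {0<..<1}. beta_cdf \<alpha>1 x = beta_cdf \<alpha>2 x} = {1/2}"
proof -
  have "beta_cdf \<alpha>1 x \<noteq> beta_cdf \<alpha>2 x" if "0 < x" "x < 1" "x \<noteq> 1/2" for x
  proof (cases "\<alpha>1 < \<alpha>2")
    case True then show ?thesis using neq that assms by blast
  next
    case False then have "\<alpha>2 < \<alpha>1" using assms by auto
    then show ?thesis using neq[of \<alpha>2 \<alpha>1 x] that assms by metis
  qed
  note H = this
  show ?thesis
  proof (rule set_eqI, rule iffI)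
    fix x assume "x \<in> {x \<in> {0<..<1}. beta_cdf \<alpha>1 x = beta_cdf \<alpha>2 x}"
    then show "x \<in> {1/2}" using H by fastforce
  next
    fix x assume "x \<in> {1/2::real}"
    then have x: "x = 1/2" by simp
    have e: "beta_cdf \<alpha>1 (1/2) = beta_cdf \<alpha>2 (1/2)"
      using half[OF assms(1)] half[OF assms(2)] by metis
    show "x \<in> {x \<in> {0<..<1}. beta_cdf \<alpha>1 x = beta_cdf \<alpha>2 x}"
      unfolding x mem_Collect_eq using e by auto
  qed
qed

end
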